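(* For the complete graph $K_6$, with $\Pi_1,\dots,\Pi_{10}$ its pairs of disjoint odd cycles (triangles), there is no choice of edges $b^1,\dots,b^{10}$ with $b^i$ a bridge of $\Pi_i$ such that: for each $i$, the even closed walk $E_i$ of $b^i$ in $\Pi_i$ contains at most $2$ edges of $\{b^1,\dots,b^{10}\}\setminus\{b^i\}$, and the number of indices $i$ for which $E_i$ contains exactly $2$ edges of $\{b^1,\dots,b^{10}\}\setminus\{b^i\}$ is at most $2$.
   Context: Two odd cycles are disjoint if they have no common vertex. A bridge of a pair $(C,C')$ of disjoint odd cycles is an edge with one endpoint on $C$ and the other on $C'$. For a bridge $b=\{u,v\}$ of $(C,C')$ with $u\in C$, $v\in C'$, the even closed walk of $b$ in $(C,C')$ is the closed walk obtained by traversing $C$ once starting and ending at $u$, then $b$ from $u$ to $v$, then traversing $C'$ once starting and ending at $v$, then $b$ back from $v$ to $u$. An edge is contained in the walk if it occurs in it. *)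

theory Defs
  imports Main
begin

definition K6_V :: "nat set" where
  "K6_V = {0..<6}"

definition K6_E :: "nat set set" where
  "K6_E = {{x, y} | x y. x \<in> K6_V \<and> y \<in> K6_V \<and> x \<noteq> y}"

text \<open>A triangle (odd cycle of length 3) of K6, given by its vertex set.\<close>
definition triangle :: "nat set \<Rightarrow> bool" where
  "triangle C \<longleftrightarrow> C \<subseteq> K6_V \<and> card C = 3"

definition tri_edges :: "nat set \<Rightarrow> nat set set" where
  "tri_edges C = {{x, y} | x y. x \<in> C \<and> y \<in> C \<and> x \<noteq> y}"

text \<open>Unordered pairs of disjoint triangles of K6 (there are 10 of them).\<close>
definition tri_pairs :: "nat set set set" where
  "tri_pairs = {{C, C'} | C C'. triangle C \<and> triangle C' \<and> C \<inter> C' = {}}"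

definition is_bridge :: "nat set set \<Rightarrow> nat set \<Rightarrow> bool" where
  "is_bridge P e \<longleftrightarrow> (\<exists>C C' u v. P = {C, C'} \<and> u \<in> C \<and> v \<in> C' \<and> e = {u, v})"

text \<open>Edges occurring in the even closed walk of bridge b in the pair P:
  all edges of both cycles together with b.\<close>
definition walk_edges :: "nat set set \<Rightarrow> nat set \<Rightarrow> nat set set" where
  "walk_edges P b = (\<Union>C\<in>P. tri_edges C) \<union> {b}"

end

theory Submission
  imports Defs
begin

lemma avoid4: "\<exists>x<6::nat. x \<notin> {a,b,c,d}"
proof (rule ccontr)
  assume "\<not> ?thesis"
  then have "{0..<6} \<subseteq> {a,b,c,d}" by auto
  then have "card {0..<(6::nat)} \<le> card {a,b,c,d}" by (intro card_mono) auto
  moreover have "card {a,b,c,d} \<le> 4" using card_length[of "[a,b,c,d]"] by simp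
  ultimately show False by simp
qed

lemma pick_x:
  assumes "a<6" "b<6" "c<6" "d<6" "a\<noteq>b" "c\<noteq>d"
  shows "\<exists>x<6::nat. x\<noteq>a \<and> x\<noteq>b \<and> ((c=a\<or>c=b\<or>c=x) \<longleftrightarrow> (d=a\<or>d=b\<or>d=x))"
proof (cases "c \<in> {a,b}")
  case cT: True
  show ?thesis
  proof (cases "d \<in> {a,b}")
    case True
    obtain x where "x<6" "x \<notin> {a,b,a,b}" using avoid4 by blast
    then show ?thesis using cT True by auto
  next
    case False
    then show ?thesis using cT assms by (intro exI[of _ d]) auto
  qed
next
  case cF: False
  show ?thesis
  proof (cases "d \<in> {a,b}")
    case True
    then show ?thesis using cF assms by (intro exI[of _ c]) auto
  next
    case False
    obtain x where "x<6" "x \<notin> {a,b,c,d}" using avoid4 by blast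
    then show ?thesis using cF False by auto
  qed
qed

lemma K6_V_fin: "finite K6_V" by (simp add: K6_V_def)

lemma two_edges:
  assumes "u \<in> K6_V" "v \<in> K6_V" "u\<noteq>v" "c \<in> K6_V" "d \<in> K6_V" "c\<noteq>d"
  shows "\<exists>P\<in>tri_pairs. {u,v} \<in> (\<Union>C\<in>P. tri_edges C) \<and> {c,d} \<in> (\<Union>C\<in>P. tri_edges C)"
proof -
  obtain x where x: "x<6" "x\<noteq>u" "x\<noteq>v" "(c=u\<or>c=v\<or>c=x) \<longleftrightarrow> (d=u\<or>d=v\<or>d=x)"
    proof -
    have "u<6" "v<6" "c<6" "d<6" using assms by (simp_all add: K6_V_def)
    then show ?thesis using pick_x[of u v c d] assms that by blast
  qed
  define C where "C = {u,v,x}"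
  define C' where "C' = K6_V - C"
  have sub: "C \<subseteq> K6_V" using assms x by (auto simp: C_def K6_V_def)
  have cC: "card C = 3" using assms x by (simp add: C_def)
  have cC': "card C' = 3" unfolding C'_def
    using card_Diff_subset[OF finite_subset[OF sub K6_V_fin] sub] cC by (simp add: K6_V_def)
  have tC: "triangle C" using sub cC by (simp add: triangle_def)
  have tC': "triangle C'" using cC' by (auto simp: triangle_def C'_def)
  have dj: "C \<inter> C' = {}" by (auto simp: C'_def)
  have P: "{C,C'} \<in> tri_pairs" unfolding tri_pairs_def
    by (rule CollectI, rule exI[of _ C], rule exI[of _ C']) (simp add: tC tC' dj)
  have te: "{p,q} \<in> tri_edges X" if "p \<in> X" "q \<in> X" "p \<noteq> q" for p q X
    unfolding tri_edges_def by (rule CollectI, rule exI[of _ p], rule exI[of _ q]) (simp add: that)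
  have e1: "{u,v} \<in> tri_edges C" using assms by (intro te) (auto simp: C_def)
  have e2: "{c,d} \<in> tri_edges C \<or> {c,d} \<in> tri_edges C'"
  proof (cases "c \<in> C")
    case True
    then have "d \<in> C" using x by (auto simp: C_def)
    then show ?thesis using True assms te by blast
  next
    case False
    then have "d \<notin> C" using x by (auto simp: C_def)
    then have "c \<in> C'" "d \<in> C'" using False assms by (auto simp: C'_def)
    then show ?thesis using assms te by blast
  qed
  have "{u,v} \<in> (\<Union>X\<in>{C,C'}. tri_edges X)" using e1 by simp
  moreover have "{c,d} \<in> (\<Union>X\<in>{C,C'}. tri_edges X)" using e2 by simp
  ultimately show ?thesis using P by (intro bexI[of _ "{C,C'}"]) simp_all
qed

lemma bridge_edge:
  assumes "P \<in> tri_pairs" "is_bridge P e"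
  shows "\<exists>u v. e = {u,v} \<and> u \<in> K6_V \<and> v \<in> K6_V \<and> u \<noteq> v"
        "e \<notin> (\<Union>C\<in>P. tri_edges C)"
proof -
  obtain C C' u v where b: "P = {C,C'}" "u \<in> C" "v \<in> C'" "e = {u,v}"
    using assms(2) unfolding is_bridge_def by blast
  obtain D D' where d: "P = {D,D'}" "triangle D" "triangle D'" "D \<inter> D' = {}"
    using assms(1) unfolding tri_pairs_def by blast
  have cc: "C \<inter> C' = {}" "C \<subseteq> K6_V" "C' \<subseteq> K6_V"
    using b(1) d unfolding triangle_def by (auto simp: doubleton_eq_iff)
  show "\<exists>u v. e = {u,v} \<and> u \<in> K6_V \<and> v \<in> K6_V \<and> u \<noteq> v"
    using b cc by blast
  show "e \<notin> (\<Union>C\<in>P. tri_edges C)"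
  proof
    assume "e \<in> (\<Union>C\<in>P. tri_edges C)"
    then obtain X x y where "X \<in> P" "x \<in> X" "y \<in> X" "e = {x,y}"
      unfolding tri_edges_def by blast
    then show False using b cc by (auto simp: doubleton_eq_iff)
  qed
qed

lemma tri_pairs_fin: "finite tri_pairs"
proof -
  have "tri_pairs \<subseteq> Pow (Pow K6_V)"
    unfolding tri_pairs_def triangle_def by auto
  then show ?thesis using finite_subset K6_V_fin by blast
qed

lemma walk_fin: "P \<in> tri_pairs \<Longrightarrow> finite (walk_edges P e)"
proof -
  assume "P \<in> tri_pairs"
  then obtain C C' where c: "P = {C,C'}" "C \<subseteq> K6_V" "C' \<subseteq> K6_V"
    unfolding tri_pairs_def triangle_def by blast
  have "\<And>X. X \<subseteq> K6_V \<Longrightarrow> tri_edges X \<subseteq> Pow K6_V" unfolding tri_edges_def by auto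
  then have "walk_edges P e \<subseteq> Pow K6_V \<union> {e}" using c unfolding walk_edges_def by auto
  then show ?thesis using finite_subset K6_V_fin by blast
qed

theorem theorem3p3:
  "\<not> (\<exists>b :: nat set set \<Rightarrow> nat set.
        (\<forall>P\<in>tri_pairs. is_bridge P (b P)) \<and>
        (\<forall>P\<in>tri_pairs. card (walk_edges P (b P) \<inter> (b ` tri_pairs - {b P})) \<le> 2) \<and>
        card {P \<in> tri_pairs. card (walk_edges P (b P) \<inter> (b ` tri_pairs - {b P})) = 2} \<le> 2)"
proof
  assume "\<exists>b :: nat set set \<Rightarrow> nat set.
        (\<forall>P\<in>tri_pairs. is_bridge P (b P)) \<and>
        (\<forall>P\<in>tri_pairs. card (walk_edges P (b P) \<inter> (b ` tri_pairs - {b P})) \<le> 2) \<and>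
        card {P \<in> tri_pairs. card (walk_edges P (b P) \<inter> (b ` tri_pairs - {b P})) = 2} \<le> 2"
  then obtain b where br: "\<forall>P\<in>tri_pairs. is_bridge P (b P)"
    and le2: "\<forall>P\<in>tri_pairs. card (walk_edges P (b P) \<inter> (b ` tri_pairs - {b P})) \<le> 2"
    and few: "card {P \<in> tri_pairs. card (walk_edges P (b P) \<inter> (b ` tri_pairs - {b P})) = 2} \<le> 2"
    by blast
  define B where "B = b ` tri_pairs"
  define TE where "TE P = (\<Union>C\<in>P. tri_edges C)" for P :: "nat set set"
  define cnt where "cnt P = card (walk_edges P (b P) \<inter> (B - {b P}))" for P
  have edge: "\<exists>u v. e = {u,v} \<and> u \<in> K6_V \<and> v \<in> K6_V \<and> u \<noteq> v" if "e \<in> B" for e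
    using that bridge_edge(1) br unfolding B_def by blast
  have pair: "\<exists>P\<in>tri_pairs. e1 \<in> TE P \<and> e2 \<in> TE P" if e1B: "e1 \<in> B" and e2B: "e2 \<in> B" for e1 e2
  proof -
    obtain u v where uv: "e1 = {u,v}" "u \<in> K6_V" "v \<in> K6_V" "u \<noteq> v" using edge[OF e1B] by blast
    obtain c d where cd: "e2 = {c,d}" "c \<in> K6_V" "d \<in> K6_V" "c \<noteq> d" using edge[OF e2B] by blast
    show ?thesis using two_edges[OF uv(2-4) cd(2-4)] unfolding TE_def uv(1) cd(1) .
  qed
  have cntge: "card S \<le> cnt P" if "P \<in> tri_pairs" "S \<subseteq> B \<inter> TE P" for P S
  proof -
    have "b P \<notin> TE P" using bridge_edge(2) br that(1) unfolding TE_def by blast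
    then have "S \<subseteq> walk_edges P (b P) \<inter> (B - {b P})"
      using that(2) unfolding walk_edges_def TE_def by auto
    then show ?thesis unfolding cnt_def
      using card_mono walk_fin[OF that(1)] by (meson finite_Int)
  qed
  have le2': "cnt P \<le> 2" if "P \<in> tri_pairs" for P using le2 that unfolding cnt_def B_def by blast
  have few': "card {P \<in> tri_pairs. cnt P = 2} \<le> 2" using few unfolding cnt_def B_def .
  have P0: "{{0,1,2},{3,4,5}} \<in> tri_pairs"
    unfolding tri_pairs_def triangle_def K6_V_def
    by (rule CollectI, rule exI[of _ "{0,1,2}"], rule exI[of _ "{3,4,5}"]) simp
  show False
  proof (cases "\<exists>e1 e2 e3. e1 \<in> B \<and> e2 \<in> B \<and> e3 \<in> B \<and> e1 \<noteq> e2 \<and> e1 \<noteq> e3 \<and> e2 \<noteq> e3")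
    case True
    then obtain e1 e2 e3 where e: "e1 \<in> B" "e2 \<in> B" "e3 \<in> B" "e1 \<noteq> e2" "e1 \<noteq> e3" "e2 \<noteq> e3"
      by blast
    obtain P12 where p12: "P12 \<in> tri_pairs" "e1 \<in> TE P12" "e2 \<in> TE P12" using pair e by blast
    obtain P13 where p13: "P13 \<in> tri_pairs" "e1 \<in> TE P13" "e3 \<in> TE P13" using pair e by blast
    obtain P23 where p23: "P23 \<in> tri_pairs" "e2 \<in> TE P23" "e3 \<in> TE P23" using pair e by blast
    have c12: "cnt P12 = 2" using cntge[OF p12(1), of "{e1,e2}"] p12 e le2'[OF p12(1)] by auto
    have c13: "cnt P13 = 2" using cntge[OF p13(1), of "{e1,e3}"] p13 e le2'[OF p13(1)] by auto
    have c23: "cnt P23 = 2" using cntge[OF p23(1), of "{e2,e3}"] p23 e le2'[OF p23(1)] by auto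
    have no3: "\<not> (e1 \<in> TE P \<and> e2 \<in> TE P \<and> e3 \<in> TE P)" if "P \<in> tri_pairs" for P
      using cntge[OF that, of "{e1,e2,e3}"] le2'[OF that] e by auto
    have d: "P12 \<noteq> P13" "P12 \<noteq> P23" "P13 \<noteq> P23"
      using no3[OF p12(1)] no3[OF p13(1)] p12 p13 p23 by auto
    have "{P12,P13,P23} \<subseteq> {P \<in> tri_pairs. cnt P = 2}" using c12 c13 c23 p12 p13 p23 by auto
    then have "card {P12,P13,P23} \<le> card {P \<in> tri_pairs. cnt P = 2}"
      using card_mono tri_pairs_fin by (metis (no_types, lifting) finite_subset mem_Collect_eq subsetI)
    then show False using few' d by auto
  next
    case False
    note nt = False
    define e1 where "e1 = b {{0,1,2},{3,4,5}}"
    have e1: "e1 \<in> B" using P0 unfolding B_def e1_def by (rule imageI)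
    obtain e2 where e2: "e2 \<in> B" "\<forall>e\<in>B. e = e1 \<or> e = e2"
    proof (cases "\<exists>e2\<in>B. e2 \<noteq> e1")
      case True
      then obtain e2 where e2: "e2 \<in> B" "e2 \<noteq> e1" by blast
      have "\<forall>e\<in>B. e = e1 \<or> e = e2"
      proof
        fix e assume "e \<in> B"
        then show "e = e1 \<or> e = e2" using nt e1 e2 by blast
      qed
      then show ?thesis using that e2(1) by blast
    next
      case False
      then show ?thesis using that e1 by blast
    qed
    obtain P where p: "P \<in> tri_pairs" "e1 \<in> TE P" "e2 \<in> TE P" using pair[OF e1 e2(1)] by blast
    have "b P \<in> B" using p(1) unfolding B_def by (rule imageI)
    then have "b P = e1 \<or> b P = e2" using e2(2) by blast
    then have "b P \<in> TE P" using p(2,3) by auto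
    moreover have "b P \<notin> TE P" using bridge_edge(2) br p(1) unfolding TE_def by blast
    ultimately show False by blast
  qed
qed

end
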